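(* Let $q_1=(\mathbf A_1,\mathbf b_1),q_2=(\mathbf A_2,\mathbf b_2)\in Q$ be distinct points such that the line $q_1q_2$ is horizontal. Then the projected pair of 2-gons, with vertices $A_1=[\mathbf A_1],A_2=[\mathbf A_2]$ and edges $b_1=[\mathbf b_1],b_2=[\mathbf b_2]$, is inscribed, i.e., the point $b_1\cap b_2$ lies on the line $A_1A_2$. Conversely, every inscribed pair of 2-gons (points $A_1\neq A_2$, lines $b_1\neq b_2$ with $b_1\cap b_2\in A_1A_2$) with $A_i\notin b_i$ for $i=1,2$ lifts to a unique horizontal 2-gon in $Q$, i.e., there are unique $(\mathbf A_i,\mathbf b_i)\in Q$ with $[\mathbf A_i]=A_i$, $[\mathbf b_i]=b_i$ and the line through them horizontal.
   Context: $Q:=\{(\mathbf A,\mathbf b)\in\mathbb R^3\times(\mathbb R^3)^*:\mathbf b\mathbf A=1\}$ ($\mathbf A$ column, $\mathbf b$ row). For $\mathbf A,\mathbf A'\in\mathbb R^3$, $\mathbf A\times\mathbf A':=\det(\mathbf A,\mathbf A',\cdot)\in(\mathbb R^3)^*$. The distribution $\mathscr D$ on $Q$ at $(\mathbf A,\mathbf b)$ consists of vectors $(\dot{\mathbf A},\dot{\mathbf b})$ with $\dot{\mathbf b}\mathbf A+\mathbf b\dot{\mathbf A}=0$ and $\dot{\mathbf b}=\mathbf A\times\dot{\mathbf A}$. A line is horizontal if it is an affine line contained in $Q$ and everywhere tangent to $\mathscr D$. $[\mathbf A]\in\mathbb{RP}^2$ is the point with homogeneous coordinates $\mathbf A$;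 $[\mathbf b]$ is the line $\{X:\mathbf bX=0\}$. *)

theory Defs
  imports "HOL-Analysis.Analysis"
begin

text \<open>Column vectors A and row vectors (covectors) b of R^3 are both modelled as real^3;
  the pairing b A is the inner product b \<bullet> A.\<close>

definition det3 :: "real^3 \<Rightarrow> real^3 \<Rightarrow> real^3 \<Rightarrow> real" where
  "det3 A B C = det (transpose (vector [A, B, C] :: real^3^3))"

definition cross_form :: "real^3 \<Rightarrow> real^3 \<Rightarrow> real^3" where
  "cross_form A A' = (\<chi> i. det3 A A' (axis i 1))"

definition in_Q :: "real^3 \<Rightarrow> real^3 \<Rightarrow> bool" where
  "in_Q A b \<longleftrightarrow> b \<bullet> A = 1"

definition in_D :: "real^3 \<Rightarrow> real^3 \<Rightarrow> real^3 \<Rightarrow> real^3 \<Rightarrow> bool" where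
  "in_D A b dA db \<longleftrightarrow> db \<bullet> A + b \<bullet> dA = 0 \<and> db = cross_form A dA"

text \<open>The affine line through two distinct points (A1,b1), (A2,b2) is horizontal:
  contained in Q and everywhere tangent to D (its tangent direction is the difference).\<close>
definition horizontal_line :: "real^3 \<Rightarrow> real^3 \<Rightarrow> real^3 \<Rightarrow> real^3 \<Rightarrow> bool" where
  "horizontal_line A1 b1 A2 b2 \<longleftrightarrow> (A1, b1) \<noteq> (A2, b2) \<and>
     (\<forall>t::real. in_Q (A1 + t *\<^sub>R (A2 - A1)) (b1 + t *\<^sub>R (b2 - b1)) \<and>
                in_D (A1 + t *\<^sub>R (A2 - A1)) (b1 + t *\<^sub>R (b2 - b1)) (A2 - A1) (b2 - b1))"

definition proj_eq :: "real^3 \<Rightarrow> real^3 \<Rightarrow> bool" where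
  "proj_eq u v \<longleftrightarrow> u \<noteq> 0 \<and> v \<noteq> 0 \<and> (\<exists>c. c \<noteq> 0 \<and> v = c *\<^sub>R u)"

definition inscribed :: "real^3 \<Rightarrow> real^3 \<Rightarrow> real^3 \<Rightarrow> real^3 \<Rightarrow> bool" where
  "inscribed a1 a2 c1 c2 \<longleftrightarrow> a1 \<noteq> 0 \<and> a2 \<noteq> 0 \<and> c1 \<noteq> 0 \<and> c2 \<noteq> 0 \<and>
     \<not> proj_eq a1 a2 \<and> \<not> proj_eq c1 c2 \<and>
     (\<forall>X. X \<noteq> 0 \<and> c1 \<bullet> X = 0 \<and> c2 \<bullet> X = 0 \<longrightarrow> det3 a1 a2 X = 0)"

end

theory Submission
  imports Defs "HOL-Analysis.Cross3"
begin

lemma cf: "cross_form A B = cross3 A B"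
  unfolding cross_form_def det3_def det_transpose
  by (simp add: cross3_simps axis_def forall_3 det_3)

lemma d3: "det3 A B C = inner (cross3 A B) C"
  unfolding det3_def det_transpose by (simp add: cross3_simps det_3)

lemma decomp: "(inner (cross3 c1 c2) (cross3 c1 c2)) *\<^sub>R n =
   inner (cross3 n c2) (cross3 c1 c2) *\<^sub>R c1 + inner (cross3 c1 n) (cross3 c1 c2) *\<^sub>R c2
   + inner n (cross3 c1 c2) *\<^sub>R cross3 c1 c2"
  by (simp add: cross3_simps forall_3)

lemma cr1: "inner (cross3 A B) A = 0" "inner (cross3 A B) B = 0"
  using dot_cross_self by (auto simp: inner_commute)

lemma horiz_iff:
  assumes "inner b1 A1 = 1"
  shows "horizontal_line A1 b1 A2 b2 \<longleftrightarrow> (A1,b1) \<noteq> (A2,b2) \<and> inner b2 A2 = 1 \<and>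
     inner b1 A2 = 1 \<and> inner b2 A1 = 1 \<and> b2 - b1 = cross3 A1 A2"
proof
  assume H: "horizontal_line A1 b1 A2 b2"
  then have ne: "(A1,b1) \<noteq> (A2,b2)" by (simp add: horizontal_line_def)
  from H have q1: "in_Q (A1 + 1 *\<^sub>R (A2 - A1)) (b1 + 1 *\<^sub>R (b2 - b1))"
    unfolding horizontal_line_def by blast
  then have e2: "inner b2 A2 = 1" by (simp add: in_Q_def)
  from H have d0: "in_D (A1 + 0 *\<^sub>R (A2 - A1)) (b1 + 0 *\<^sub>R (b2 - b1)) (A2 - A1) (b2 - b1)"
    unfolding horizontal_line_def by blast
  then have d0a: "inner (b2 - b1) A1 + inner b1 (A2 - A1) = 0"
    and d0b: "b2 - b1 = cross_form A1 (A2 - A1)" by (auto simp: in_D_def)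
  have X: "b2 - b1 = cross3 A1 A2" using d0b by (simp add: cf Cross3.right_diff_distrib)
  have z: "inner (b2 - b1) A1 = 0" using X cr1 by simp
  have e3: "inner b1 A2 = 1" using d0a z assms by (simp add: inner_diff_right)
  have e4: "inner b2 A1 = 1" using z assms by (simp add: inner_diff_left)
  show "(A1,b1) \<noteq> (A2,b2) \<and> inner b2 A2 = 1 \<and>
     inner b1 A2 = 1 \<and> inner b2 A1 = 1 \<and> b2 - b1 = cross3 A1 A2"
    using ne e2 e3 e4 X by blast
next
  assume H: "(A1,b1) \<noteq> (A2,b2) \<and> inner b2 A2 = 1 \<and>
     inner b1 A2 = 1 \<and> inner b2 A1 = 1 \<and> b2 - b1 = cross3 A1 A2"
  then have X: "b2 - b1 = cross3 A1 A2" and e3: "inner b1 A2 = 1" by auto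
  have z1: "inner (cross3 A1 A2) A1 = 0" and z2: "inner (cross3 A1 A2) A2 = 0" using cr1 by auto
  show "horizontal_line A1 b1 A2 b2"
    unfolding horizontal_line_def
  proof (intro conjI allI)
    show "(A1,b1) \<noteq> (A2,b2)" using H by blast
  next
    fix t :: real
    show "in_Q (A1 + t *\<^sub>R (A2 - A1)) (b1 + t *\<^sub>R (b2 - b1))"
      unfolding in_Q_def X using z1 z2 e3 assms
      by (simp add: inner_add_left inner_add_right inner_diff_left inner_diff_right)
    show "in_D (A1 + t *\<^sub>R (A2 - A1)) (b1 + t *\<^sub>R (b2 - b1)) (A2 - A1) (b2 - b1)"
      unfolding in_D_def X cf using z1 z2 e3 assms
      by (simp add: inner_add_left inner_add_right inner_diff_left inner_diff_right
          cross_add_left cross_mult_left cross_skew[of A2 A1] Cross3.left_diff_distrib Cross3.right_diff_distrib)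
  qed
qed


lemma cross_nz:
  assumes "u \<noteq> 0" "v \<noteq> 0" "\<not> proj_eq u v"
  shows "cross3 u v \<noteq> 0"
proof
  assume "cross3 u v = 0"
  then obtain c where c: "v = c *\<^sub>R u" using assms cross_eq_0 collinear_lemma by metis
  then have "c \<noteq> 0" using assms by auto
  then show False using assms c unfolding proj_eq_def by blast
qed

lemma indep:
  assumes "u \<noteq> 0" "v \<noteq> 0" "\<not> proj_eq u v" "x *\<^sub>R u + y *\<^sub>R v = 0"
  shows "x = 0 \<and> y = 0"
proof (cases "y = 0")
  case True
  then show ?thesis using assms by auto
next
  case False
  have v: "v = (- x / y) *\<^sub>R u" using assms(4) False
    by (metis (no_types, lifting) add.commute add_eq_0_iff divide_inverse_commute
        mult.commute scaleR_right.minus scaleR_scaleR scaleR_zero_left scaleR_left.minus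
        inverse_mult_distrib left_inverse scaleR_one)
  have "- x / y \<noteq> 0" using v assms(2) by auto
  then show ?thesis using v assms unfolding proj_eq_def by blast
qed

lemma part1:
  assumes "in_Q A1 b1" "in_Q A2 b2" "horizontal_line A1 b1 A2 b2"
  shows "inscribed A1 A2 b1 b2"
proof -
  have e1: "inner b1 A1 = 1" using assms by (simp add: in_Q_def)
  then have H: "(A1,b1) \<noteq> (A2,b2)" "inner b2 A2 = 1" "inner b1 A2 = 1" "inner b2 A1 = 1"
     "b2 - b1 = cross3 A1 A2" using horiz_iff assms(3) by blast+
  have nz: "A1 \<noteq> 0" "A2 \<noteq> 0" "b1 \<noteq> 0" "b2 \<noteq> 0" using e1 H by auto
  have pA: "\<not> proj_eq A1 A2"
  proof
    assume "proj_eq A1 A2"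
    then obtain c where c: "A2 = c *\<^sub>R A1" unfolding proj_eq_def by blast
    then have "cross3 A1 A2 = 0" by (simp add: cross_mult_right)
    then have "b2 = b1" using H by simp
    then have "c = 1" using H(3) c e1 by simp
    then show False using c H \<open>b2 = b1\<close> by simp
  qed
  have pb: "\<not> proj_eq b1 b2"
  proof
    assume "proj_eq b1 b2"
    then obtain c where c: "b2 = c *\<^sub>R b1" unfolding proj_eq_def by blast
    then have "c = 1" using H(4) e1 by simp
    then have "cross3 A1 A2 = 0" using H c by simp
    then obtain k where k: "A2 = k *\<^sub>R A1" using nz cross_eq_0 collinear_lemma by metis
    then have "k = 1" using H(3) e1 by simp
    then show False using k c \<open>c = 1\<close> H by simp
  qed
  have X: "det3 A1 A2 X = 0" if "inner b1 X = 0" "inner b2 X = 0" for X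
    using that H(5)[symmetric] by (simp add: d3 inner_diff_left)
  show ?thesis unfolding inscribed_def using nz pA pb X by blast
qed


lemma part2:
  assumes I: "inscribed a1 a2 c1 c2" and h1: "c1 \<bullet> a1 \<noteq> 0" and h2: "c2 \<bullet> a2 \<noteq> 0"
  shows "\<exists>!(A1, b1, A2, b2). in_Q A1 b1 \<and> in_Q A2 b2 \<and>
                proj_eq a1 A1 \<and> proj_eq a2 A2 \<and> proj_eq c1 b1 \<and> proj_eq c2 b2 \<and>
                horizontal_line A1 b1 A2 b2"
proof -
  have nz: "a1 \<noteq> 0" "a2 \<noteq> 0" "c1 \<noteq> 0" "c2 \<noteq> 0" and pa: "\<not> proj_eq a1 a2"
    and pc: "\<not> proj_eq c1 c2"
    and Xc: "\<And>X. X \<noteq> 0 \<Longrightarrow> c1 \<bullet> X = 0 \<Longrightarrow> c2 \<bullet> X = 0 \<Longrightarrow> det3 a1 a2 X = 0"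
    using I unfolding inscribed_def by blast+
  define n where "n = cross3 a1 a2"
  define m where "m = cross3 c1 c2"
  have nnz: "n \<noteq> 0" unfolding n_def using cross_nz nz pa by blast
  have mnz: "m \<noteq> 0" unfolding m_def using cross_nz nz pc by blast
  have "c1 \<bullet> m = 0" "c2 \<bullet> m = 0" unfolding m_def using dot_cross_self by auto
  then have nm: "n \<bullet> m = 0" using Xc[OF mnz] unfolding n_def by (simp add: d3)
  have mm: "m \<bullet> m \<noteq> 0" using mnz by simp
  define \<alpha> where "\<alpha> = inner (cross3 n c2) m / inner m m"
  define \<beta> where "\<beta> = inner (cross3 c1 n) m / inner m m"
  have "inner m m *\<^sub>R n = inner m m *\<^sub>R (\<alpha> *\<^sub>R c1 + \<beta> *\<^sub>R c2)"
    using decomp[of c1 c2 n] nm mm unfolding \<alpha>_def \<beta>_def m_def[symmetric]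
    by (simp add: scaleR_add_right)
  then have nab: "n = \<alpha> *\<^sub>R c1 + \<beta> *\<^sub>R c2" using mm by simp
  define p11 where "p11 = c1 \<bullet> a1"
  define p12 where "p12 = c1 \<bullet> a2"
  define p21 where "p21 = c2 \<bullet> a1"
  define p22 where "p22 = c2 \<bullet> a2"
  have "n \<bullet> a1 = 0" "n \<bullet> a2 = 0" unfolding n_def using cr1 by auto
  then have L1: "\<alpha> * p11 + \<beta> * p21 = 0" and L2: "\<alpha> * p12 + \<beta> * p22 = 0"
    unfolding nab p11_def p12_def p21_def p22_def by (auto simp: inner_add_left)
  have p11: "p11 \<noteq> 0" and p22: "p22 \<noteq> 0" using h1 h2 p11_def p22_def by auto
  have anz: "\<alpha> \<noteq> 0"
  proof
    assume "\<alpha> = 0"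
    then have "\<beta> = 0" using L2 p22 by simp
    then show False using nnz nab \<open>\<alpha> = 0\<close> by simp
  qed
  have bnz: "\<beta> \<noteq> 0"
  proof
    assume "\<beta> = 0"
    then have "\<alpha> = 0" using L1 p11 by simp
    then show False using nnz nab \<open>\<beta> = 0\<close> by simp
  qed
  have p12: "p12 \<noteq> 0" using L2 anz bnz p22 by auto
  have p21: "p21 \<noteq> 0" using L1 anz bnz p11 by auto
  define K where "K = - p12 / (\<alpha> * p11^2)"
  have Knz: "K \<noteq> 0" unfolding K_def using p12 anz p11 by simp
  define s1 where "s1 = root 3 K"
  have s1c: "s1^3 = K" unfolding s1_def by (simp add: odd_real_root_pow)
  have s1nz: "s1 \<noteq> 0" using s1c Knz by auto
  define s2 where "s2 = s1 * p11 / p12"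
  have s2nz: "s2 \<noteq> 0" unfolding s2_def using s1nz p11 p12 by simp
  define r1 where "r1 = - s1 * s2 * \<alpha>"
  define r2 where "r2 = s1 * s2 * \<beta>"
  have k1: "r1 * s1 * p11 = 1"
  proof -
    have "r1 * s1 * p11 = - (s1^3 * \<alpha> * p11^2 / p12)"
      unfolding r1_def s2_def by (simp add: power2_eq_square power3_eq_cube)
    also have "\<dots> = 1" unfolding s1c K_def using anz p11 p12 by (simp add: field_simps)
    finally show ?thesis .
  qed
  have k2: "r1 * s2 * p12 = 1"
  proof -
    have "r1 * s2 * p12 = r1 * s1 * p11" unfolding s2_def using p12 by simp
    then show ?thesis using k1 by simp
  qed
  have k3: "r2 * s2 * p22 = 1"
  proof -
    have "r2 * s2 * p22 = s1 * s2 * s2 * (\<beta> * p22)" unfolding r2_def by simp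
    also have "\<dots> = s1 * s2 * s2 * (- (\<alpha> * p12))" using L2 by (metis add.commute add_eq_0_iff)
    also have "\<dots> = r1 * s2 * p12" unfolding r1_def by (simp add: algebra_simps)
    finally show ?thesis using k2 by simp
  qed
  have k4: "r2 * s1 * p21 = 1"
  proof -
    have "r2 * s1 * p21 = s1 * s2 * s1 * (\<beta> * p21)" unfolding r2_def by simp
    also have "\<dots> = s1 * s2 * s1 * (- (\<alpha> * p11))" using L1 by (metis add.commute add_eq_0_iff)
    also have "\<dots> = r1 * s1 * p11" unfolding r1_def by (simp add: algebra_simps)
    finally show ?thesis using k1 by simp
  qed
  have ex: "in_Q (s1 *\<^sub>R a1) (r1 *\<^sub>R c1) \<and> in_Q (s2 *\<^sub>R a2) (r2 *\<^sub>R c2) \<and>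
                proj_eq a1 (s1 *\<^sub>R a1) \<and> proj_eq a2 (s2 *\<^sub>R a2) \<and> proj_eq c1 (r1 *\<^sub>R c1)
                \<and> proj_eq c2 (r2 *\<^sub>R c2) \<and>
                horizontal_line (s1 *\<^sub>R a1) (r1 *\<^sub>R c1) (s2 *\<^sub>R a2) (r2 *\<^sub>R c2)"
  proof (intro conjI)
    have r1nz: "r1 \<noteq> 0" using k1 by auto
    have r2nz: "r2 \<noteq> 0" using k3 by auto
    have q1: "inner (r1 *\<^sub>R c1) (s1 *\<^sub>R a1) = 1" using k1 unfolding p11_def by (simp add: mult_ac)
    show "in_Q (s1 *\<^sub>R a1) (r1 *\<^sub>R c1)" using q1 by (simp add: in_Q_def)
    show "in_Q (s2 *\<^sub>R a2) (r2 *\<^sub>R c2)" using k3 unfolding p22_def by (simp add: in_Q_def mult_ac)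
    show "proj_eq a1 (s1 *\<^sub>R a1)" "proj_eq a2 (s2 *\<^sub>R a2)" "proj_eq c1 (r1 *\<^sub>R c1)"
      "proj_eq c2 (r2 *\<^sub>R c2)" unfolding proj_eq_def using nz s1nz s2nz r1nz r2nz by auto
    have dist: "s1 *\<^sub>R a1 \<noteq> s2 *\<^sub>R a2"
    proof
      assume "s1 *\<^sub>R a1 = s2 *\<^sub>R a2"
      then have "a2 = (s1 / s2) *\<^sub>R a1" using s2nz
        by (metis (no_types, lifting) divide_inverse_commute mult.commute
            scaleR_scaleR inverse_mult_distrib left_inverse scaleR_one)
      moreover have "s1 / s2 \<noteq> 0" using s1nz s2nz by simp
      ultimately show False using pa nz unfolding proj_eq_def by blast
    qed
    have crs: "r2 *\<^sub>R c2 - r1 *\<^sub>R c1 = cross3 (s1 *\<^sub>R a1) (s2 *\<^sub>R a2)"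
      unfolding cross_mult_left cross_mult_right n_def[symmetric] nab r1_def r2_def
      by (simp add: algebra_simps)
    show "horizontal_line (s1 *\<^sub>R a1) (r1 *\<^sub>R c1) (s2 *\<^sub>R a2) (r2 *\<^sub>R c2)"
      using horiz_iff[OF q1] dist crs k2 k3 k4
      unfolding p12_def p21_def p22_def by (simp add: mult_ac)
  qed
  have uniq: "(A1, b1, A2, b2) = (s1 *\<^sub>R a1, r1 *\<^sub>R c1, s2 *\<^sub>R a2, r2 *\<^sub>R c2)"
    if P: "in_Q A1 b1 \<and> in_Q A2 b2 \<and>
                proj_eq a1 A1 \<and> proj_eq a2 A2 \<and> proj_eq c1 b1 \<and> proj_eq c2 b2 \<and>
                horizontal_line A1 b1 A2 b2" for A1 b1 A2 b2
  proof -
    obtain t1 where t1: "A1 = t1 *\<^sub>R a1" using P unfolding proj_eq_def by blast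
    obtain t2 where t2: "A2 = t2 *\<^sub>R a2" using P unfolding proj_eq_def by blast
    obtain u1 where u1: "b1 = u1 *\<^sub>R c1" using P unfolding proj_eq_def by blast
    obtain u2 where u2: "b2 = u2 *\<^sub>R c2" using P unfolding proj_eq_def by blast
    have e1: "inner b1 A1 = 1" using P by (simp add: in_Q_def)
    have H: "inner b1 A2 = 1" "b2 - b1 = cross3 A1 A2"
      using horiz_iff[OF e1] P by blast+
    have "(- u1 - t1 * t2 * \<alpha>) *\<^sub>R c1 + (u2 - t1 * t2 * \<beta>) *\<^sub>R c2 = 0"
      using H(2) unfolding t1 t2 u1 u2 cross_mult_left cross_mult_right n_def[symmetric] nab
      by (simp add: algebra_simps)
    then have "- u1 - t1 * t2 * \<alpha> = 0 \<and> u2 - t1 * t2 * \<beta> = 0"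
      using indep nz pc by blast
    then have u1e: "u1 = - t1 * t2 * \<alpha>" and u2e: "u2 = t1 * t2 * \<beta>" by auto
    have f1: "u1 * t1 * p11 = 1" using e1 unfolding t1 u1 p11_def by (simp add: mult_ac)
    have f2: "u1 * t2 * p12 = 1" using H(1) unfolding t2 u1 p12_def by (simp add: mult_ac)
    have u1nz: "u1 \<noteq> 0" using f1 by auto
    have g: "t1 * p11 = t2 * p12" using f1 f2 u1nz
      by (metis mult.assoc mult_left_cancel)
    have "t1^3 * (\<alpha> * p11^2) = - (u1 * t1 * p11) * p12"
    proof -
      have "t1^3 * (\<alpha> * p11^2) = t1 * t1 * \<alpha> * p11 * (t1 * p11)"
        by (simp add: power2_eq_square power3_eq_cube)
      also have "\<dots> = t1 * t1 * \<alpha> * p11 * (t2 * p12)" using g by simp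
      also have "\<dots> = - (u1 * t1 * p11) * p12" unfolding u1e by simp
      finally show ?thesis .
    qed
    then have "t1^3 = K" unfolding K_def using f1 anz p11 by (simp add: field_simps)
    then have t1e: "t1 = s1" unfolding s1_def
      by (metis odd_real_root_power_cancel odd_numeral)
    have t2e: "t2 = s2" unfolding s2_def using g t1e p12 by (simp add: field_simps)
    show ?thesis using t1 t2 u1 u2 u1e u2e t1e t2e r1_def r2_def by simp
  qed
  show ?thesis
    apply (rule ex1I[where a="(s1 *\<^sub>R a1, r1 *\<^sub>R c1, s2 *\<^sub>R a2, r2 *\<^sub>R c2)"])
    subgoal using ex by simp
    subgoal for x using uniq by (cases x) auto
    done
qed

theorem lemma1:
  shows "(\<forall>A1 b1 A2 b2. in_Q A1 b1 \<and> in_Q A2 b2 \<and> (A1, b1) \<noteq> (A2, b2) \<and>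
            horizontal_line A1 b1 A2 b2 \<longrightarrow> inscribed A1 A2 b1 b2) \<and>
         (\<forall>a1 a2 c1 c2. inscribed a1 a2 c1 c2 \<and> c1 \<bullet> a1 \<noteq> 0 \<and> c2 \<bullet> a2 \<noteq> 0 \<longrightarrow>
            (\<exists>!(A1, b1, A2, b2). in_Q A1 b1 \<and> in_Q A2 b2 \<and>
                proj_eq a1 A1 \<and> proj_eq a2 A2 \<and> proj_eq c1 b1 \<and> proj_eq c2 b2 \<and>
                horizontal_line A1 b1 A2 b2))"
  using part1 part2 by blast

end
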